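(* Let $\varrho$ be a normalized proximate order of order $\rho>0$. Then for every $0<\sigma'<\sigma$ there exists a constant $C(\sigma,\sigma')$ such that $$\|x^\ell\|_{\varrho,\sigma}\le C(\sigma,\sigma')\frac{G_{\varrho,\ell}}{\sigma'^{\ell/\rho}}\qquad\text{for all }\ell\in\mathbb{N}_0.$$
   Context: Paravectors $x=x_0+\sum_{\ell=1}^nx_\ell e_\ell$ in the Clifford algebra $\mathbb{R}_n$ are identified with $\mathbb{R}^{n+1}$, and $|x|$ is the Euclidean norm; $x^\ell$ is the monomial function. A proximate order is a differentiable $\varrho:[0,\infty)\to[0,\infty)$ with $\lim_{r\to\infty}\varrho(r)=\rho>0$ and $\lim_{r\to\infty}\varrho'(r)r\ln r=0$; normalized means $r\mapsto r^{\varrho(r)}$ is strictly increasing on $(0,\infty)$ and tends to $0$ as $r\to0^+$; $\varphi$ is the inverse of $r\mapsto r^{\varrho(r)}$, and $G_{\varrho,0}=1$, $G_{\varrho,\ell}=\varphi(\ell)^\ell/(e\rho)^{\ell/\rho}$ for $\ell\in\mathbb{N}$. For a function $f$ on $\mathbb{R}^{n+1}$ with values in $\mathbb{R}_n$, $\|f\|_{\varrho,\sigma}=\sup_{x\in\mathbb{R}^{n+1}}|f(x)|e^{-\sigma|x|^{\varrho(|x|)}}$. *)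

theory Defs
  imports "HOL-Analysis.Analysis"
begin

text \<open>Clifford algebra R_n (generators e_1..e_n with e_i^2 = -1, e_i e_j = - e_j e_i).
  An element is represented by its coefficients on the basis e_A, A a subset of {1..n}:
  a function nat set => real (coefficients outside Pow {1..n} are ignored).\<close>

type_synonym clifford = "nat set \<Rightarrow> real"

text \<open>Sign of the product e_A e_B = clif_sign A B * e_(A symdiff B), where e_A is the
  ordered product of the generators with indices in A (increasing).\<close>
definition clif_sign :: "nat set \<Rightarrow> nat set \<Rightarrow> real" where
  "clif_sign A B = (-1) ^ (card {(i, j). i \<in> A \<and> j \<in> B \<and> j < i} + card (A \<inter> B))"

definition symdiff :: "nat set \<Rightarrow> nat set \<Rightarrow> nat set" where
  "symdiff A B = (A - B) \<union> (B - A)"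

definition clif_mult :: "nat \<Rightarrow> clifford \<Rightarrow> clifford \<Rightarrow> clifford" where
  "clif_mult n a b = (\<lambda>C. if C \<subseteq> {1..n}
      then (\<Sum>A\<in>Pow {1..n}. clif_sign A (symdiff A C) * a A * b (symdiff A C)) else 0)"

definition clif_one :: clifford where
  "clif_one = (\<lambda>A. if A = {} then 1 else 0)"

fun clif_pow :: "nat \<Rightarrow> clifford \<Rightarrow> nat \<Rightarrow> clifford" where
  "clif_pow n a 0 = clif_one"
| "clif_pow n a (Suc l) = clif_mult n (clif_pow n a l) a"

definition clif_norm :: "nat \<Rightarrow> clifford \<Rightarrow> real" where
  "clif_norm n a = sqrt (\<Sum>A\<in>Pow {1..n}. (a A)^2)"

text \<open>Paravectors x = x_0 + sum x_l e_l, identified with R^(n+1): represented by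
  coordinates x :: nat => real, only x 0 .. x n are relevant.\<close>
definition paravec :: "nat \<Rightarrow> (nat \<Rightarrow> real) \<Rightarrow> clifford" where
  "paravec n x = (\<lambda>A. if A = {} then x 0
       else if (\<exists>l\<in>{1..n}. A = {l}) then x (THE l. A = {l}) else 0)"

definition para_norm :: "nat \<Rightarrow> (nat \<Rightarrow> real) \<Rightarrow> real" where
  "para_norm n x = sqrt (\<Sum>l\<le>n. (x l)^2)"

definition paravectors :: "nat \<Rightarrow> (nat \<Rightarrow> real) set" where
  "paravectors n = {x. \<forall>l>n. x l = 0}"

definition prox_norm :: "nat \<Rightarrow> (real \<Rightarrow> real) \<Rightarrow> real \<Rightarrow> ((nat \<Rightarrow> real) \<Rightarrow> clifford) \<Rightarrow> ereal" where
  "prox_norm n vr \<sigma> f = (SUP x\<in>paravectors n.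
      ereal (clif_norm n (f x) * exp (- \<sigma> * (para_norm n x) powr (vr (para_norm n x)))))"

definition proximate_order :: "(real \<Rightarrow> real) \<Rightarrow> real \<Rightarrow> bool" where
  "proximate_order vr \<rho> \<longleftrightarrow>
     (\<forall>r\<ge>0. vr differentiable (at r within {0..})) \<and>
     (\<forall>r\<ge>0. vr r \<ge> 0) \<and>
     \<rho> > 0 \<and>
     (vr \<longlongrightarrow> \<rho>) at_top \<and>
     ((\<lambda>r. deriv vr r * r * ln r) \<longlongrightarrow> 0) at_top"

definition normalized_proximate_order :: "(real \<Rightarrow> real) \<Rightarrow> real \<Rightarrow> bool" where
  "normalized_proximate_order vr \<rho> \<longleftrightarrow>
     proximate_order vr \<rho> \<and>
     strict_mono_on {0<..} (\<lambda>r. r powr vr r) \<and>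
     ((\<lambda>r. r powr vr r) \<longlongrightarrow> 0) (at_right 0)"

definition prox_phi :: "(real \<Rightarrow> real) \<Rightarrow> real \<Rightarrow> real" where
  "prox_phi vr = the_inv_into {0<..} (\<lambda>r. r powr vr r)"

definition prox_G :: "(real \<Rightarrow> real) \<Rightarrow> real \<Rightarrow> nat \<Rightarrow> real" where
  "prox_G vr \<rho> l = (if l = 0 then 1
     else (prox_phi vr (real l)) ^ l / (exp 1 * \<rho>) powr (real l / \<rho>))"

end

theory Submission
  imports Defs
begin


lemma pv_empty: "paravec n x {} = x 0"
  by (simp add: paravec_def)

lemma pv_single: "paravec n x {i} = (if i \<in> {1..n} then x i else 0)"
  by (auto simp: paravec_def)

lemma pv_other: "A \<noteq> {} \<Longrightarrow> \<not>(\<exists>i. A = {i}) \<Longrightarrow> paravec n x A = 0"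
  by (auto simp: paravec_def)

lemma sign_pair_set: "{(a, b). a \<in> {j} \<and> b \<in> {k} \<and> b < a} = (if k < j then {(j,k)} else {})"
  by auto

lemma sign_single: "clif_sign {j} {k} = (-1) ^ ((if k < j then 1 else 0) + (if j = k then 1 else 0))"
  unfolding clif_sign_def sign_pair_set by auto

lemma sign_empty: "clif_sign {} B = 1" "clif_sign A {} = 1"
  unfolding clif_sign_def by auto

lemma sum_S:
  fixes n :: nat
  assumes "\<And>A. A \<in> Pow {1..n} \<Longrightarrow> A \<noteq> {} \<Longrightarrow> \<not>(\<exists>i. A = {i}) \<Longrightarrow> g A = 0"
  shows "(\<Sum>A\<in>Pow {1..n}. g A) = g {} + (\<Sum>i=1..n. g {i})"
proof -
  let ?S = "insert {} ((\<lambda>i. {i}) ` {1..n})"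
  have "(\<Sum>A\<in>Pow {1..n}. g A) = (\<Sum>A\<in>?S. g A)"
    by (rule sum.mono_neutral_right) (auto intro!: assms)
  also have "\<dots> = g {} + (\<Sum>A\<in>(\<lambda>i. {i}) ` {1..n}. g A)"
    by (subst sum.insert) auto
  also have "(\<Sum>A\<in>(\<lambda>i. {i}) ` {1..n}. g A) = (\<Sum>i=1..n. g {i})"
    by (subst sum.reindex) (auto simp: inj_on_def)
  finally show ?thesis .
qed

lemma mult_par:
  assumes par: "\<And>i j. i\<in>{1..n} \<Longrightarrow> j\<in>{1..n} \<Longrightarrow> y i * x j = y j * x i"
  shows "clif_mult n (paravec n y) (paravec n x) = paravec n (\<lambda>i. if i = 0 then y 0 * x 0 - (\<Sum>i=1..n. y i * x i) else y 0 * x i + y i * x 0)"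
    (is "_ = paravec n ?z")
proof (rule ext)
  fix C
  show "clif_mult n (paravec n y) (paravec n x) C = paravec n ?z C"
  proof (cases "C \<subseteq> {1..n}")
    case False
    then have "C \<noteq> {}" by auto
    then show ?thesis using False
      by (cases "\<exists>i. C = {i}") (auto simp: clif_mult_def pv_single pv_other)
  next
    case True
    let ?T = "\<lambda>A. clif_sign A (symdiff A C) * paravec n y A * paravec n x (symdiff A C)"
    have "clif_mult n (paravec n y) (paravec n x) C = (\<Sum>A\<in>Pow {1..n}. ?T A)"
      using True by (simp add: clif_mult_def)
    also have "\<dots> = ?T {} + (\<Sum>i=1..n. ?T {i})"
      by (rule sum_S) (simp add: pv_other)
    finally have eq: "clif_mult n (paravec n y) (paravec n x) C = ?T {} + (\<Sum>i=1..n. ?T {i})" .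
    consider "C = {}" | k where "C = {k}" | j k where "j < k" "C = {j,k}"
      | "C \<noteq> {}" "\<not>(\<exists>k. C = {k})" "\<not>(\<exists>j k. j < k \<and> C = {j,k})"
      by (metis insert_commute linorder_neqE_nat)
    then show ?thesis
    proof cases
      case 1
      have "?T {i} = - (y i * x i)" if "i \<in> {1..n}" for i
        using that 1 by (simp add: symdiff_def sign_single pv_single)
      then have "(\<Sum>i=1..n. ?T {i}) = - (\<Sum>i=1..n. y i * x i)"
        by (simp add: sum_negf)
      then show ?thesis using eq 1 by (simp add: symdiff_def sign_empty pv_empty)
    next
      case 2
      then have k: "k \<in> {1..n}" using True by auto
      have "?T {i} = (if i = k then y k * x 0 else 0)" if "i \<in> {1..n}" for i
      proof (cases "i = k")
        case False
        then have "symdiff {i} C = {i,k}" using 2 by (auto simp: symdiff_def)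
        then show ?thesis using False by (simp add: pv_other)
      qed (use 2 that in \<open>simp add: symdiff_def sign_empty pv_empty pv_single\<close>)
      then have "(\<Sum>i=1..n. ?T {i}) = y k * x 0"
        using k by (simp add: sum.delta)
      moreover have "?T {} = y 0 * x k" using 2 k by (simp add: symdiff_def sign_empty pv_empty pv_single)
      ultimately show ?thesis using eq 2 k by (simp add: pv_single)
    next
      case 3
      then have jk: "j \<in> {1..n}" "k \<in> {1..n}" using True by auto
      have "?T {i} = (if i = j then y j * x k else 0) + (if i = k then - (y k * x j) else 0)" if "i \<in> {1..n}" for i
      proof -
        consider "i = j" | "i = k" | "i \<noteq> j" "i \<noteq> k" by blast
        then show ?thesis
        proof cases
          case 1
          then have "symdiff {i} C = {k}" using 3 by (auto simp: symdiff_def)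
          then show ?thesis using 1 3 jk by (simp add: sign_single pv_single)
        next
          case 2
          then have "symdiff {i} C = {j}" using 3 by (auto simp: symdiff_def)
          then show ?thesis using 2 3 jk by (simp add: sign_single pv_single)
        next
          case 4: 3
          then have "symdiff {i} C = {i,j,k}" using 3 by (auto simp: symdiff_def)
          then show ?thesis using 4 3 by (subst pv_other) auto
        qed
      qed
      then have "(\<Sum>i=1..n. ?T {i}) = y j * x k - y k * x j"
        using jk by (simp add: sum.distrib sum.delta)
      also have "\<dots> = 0" using par[OF jk] by simp
      moreover have "?T {} = 0" using 3 by (subst pv_other[of "symdiff {} C"]) (auto simp: symdiff_def)
      ultimately show ?thesis using eq 3 by (subst pv_other) auto
    next
      case 4
      have Ti: "?T {i} = 0" for i
      proof -
        have "symdiff {i} C \<noteq> {}" using 4 by (auto simp: symdiff_def)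
        moreover have "\<not>(\<exists>m. symdiff {i} C = {m})"
        proof
          assume "\<exists>m. symdiff {i} C = {m}"
          then obtain m where m: "symdiff {i} C = {m}" by blast
          show False
          proof (cases "i \<in> C")
            case True
            then have "C = {i, m}" "i \<noteq> m" using m by (auto simp: symdiff_def)
            then show False using 4 by (metis insert_commute linorder_neqE_nat)
          next
            case False
            then have "C \<subseteq> {m}" "i = m" using m by (auto simp: symdiff_def)
            then show False using 4 by (metis subset_singletonD)
          qed
        qed
        ultimately show ?thesis by (simp add: pv_other)
      qed
      have "(\<Sum>i=1..n. ?T {i}) = 0" by (rule sum.neutral) (use Ti in blast)
      moreover have "?T {} = 0" using 4 by (simp add: symdiff_def pv_other)
      ultimately have "clif_mult n (paravec n y) (paravec n x) C = 0" using eq by linarith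
      then show ?thesis using 4 by (simp add: pv_other)
    qed
  qed
qed

lemma pow_par:
  "\<exists>a b. clif_pow n (paravec n x) l = paravec n (\<lambda>i. if i = 0 then a else b * x i)
     \<and> a^2 + b^2 * (\<Sum>i=1..n. (x i)^2) = (x 0 ^ 2 + (\<Sum>i=1..n. (x i)^2)) ^ l"
proof (induction l)
  case 0
  have "clif_one = paravec n (\<lambda>i. if i = 0 then 1 else 0 * x i)"
  proof (rule ext)
    fix A show "clif_one A = paravec n (\<lambda>i. if i = 0 then 1 else 0 * x i) A"
      by (cases "A = {}"; cases "\<exists>k. A = {k}") (auto simp: clif_one_def pv_empty pv_single pv_other split: if_splits)
  qed
  then show ?case by (intro exI[of _ 1] exI[of _ 0]) simp
next
  case (Suc l)
  then obtain a b where ab: "clif_pow n (paravec n x) l = paravec n (\<lambda>i. if i = 0 then a else b * x i)"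
    "a^2 + b^2 * (\<Sum>i=1..n. (x i)^2) = (x 0 ^ 2 + (\<Sum>i=1..n. (x i)^2)) ^ l" by blast
  define w where "w = (\<Sum>i=1..n. (x i)^2)"
  have par: "(if i = 0 then a else b * x i) * x j = (if j = 0 then a else b * x j) * x i"
    if "i \<in> {1..n}" "j \<in> {1..n}" for i j using that by auto
  have "clif_pow n (paravec n x) (Suc l) = clif_mult n (paravec n (\<lambda>i. if i = 0 then a else b * x i)) (paravec n x)"
    using ab by simp
  also have "\<dots> = paravec n (\<lambda>i. if i = 0 then a * x 0 - b * w else (a + b * x 0) * x i)"
  proof -
    have "(\<Sum>i=1..n. (if i = 0 then a else b * x i) * x i) = b * w"
      unfolding w_def by (simp add: sum_distrib_left power2_eq_square mult.assoc)
    then show ?thesis by (subst mult_par[OF par]) (auto intro!: arg_cong[where f="paravec n"] simp: algebra_simps)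
  qed
  finally show ?case
  proof (intro exI conjI)
    have "(a * x 0 - b * w)^2 + (a + b * x 0)^2 * w = (a^2 + b^2 * w) * (x 0 ^ 2 + w)"
      by (simp add: algebra_simps power2_eq_square)
    then show "(a * x 0 - b * w)^2 + (a + b * x 0)^2 * (\<Sum>i=1..n. (x i)^2) = (x 0 ^ 2 + (\<Sum>i=1..n. (x i)^2)) ^ Suc l"
      using ab(2) unfolding w_def by simp
  qed
qed

lemma norm_pv: "clif_norm n (paravec n y) = sqrt (y 0 ^ 2 + (\<Sum>i=1..n. (y i)^2))"
  unfolding clif_norm_def by (subst sum_S) (auto simp: pv_other pv_empty pv_single)

lemma para_norm_split: "para_norm n x = sqrt (x 0 ^ 2 + (\<Sum>i=1..n. (x i)^2))"
proof -
  have "{..n} = insert 0 {1..n}" by auto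
  then show ?thesis unfolding para_norm_def by simp
qed

lemma norm_pow: "clif_norm n (clif_pow n (paravec n x) l) = para_norm n x ^ l"
proof -
  obtain a b where ab: "clif_pow n (paravec n x) l = paravec n (\<lambda>i. if i = 0 then a else b * x i)"
    "a^2 + b^2 * (\<Sum>i=1..n. (x i)^2) = (x 0 ^ 2 + (\<Sum>i=1..n. (x i)^2)) ^ l"
    using pow_par by blast
  have "(\<Sum>i=1..n. (b * x i)^2) = b^2 * (\<Sum>i=1..n. (x i)^2)"
    by (simp add: sum_distrib_left power_mult_distrib)
  then show ?thesis using ab by (simp add: norm_pv para_norm_split real_sqrt_power)
qed



lemma key_ineq:
  fixes \<rho> b D :: real
  assumes "\<rho> > 0" "b > 0"
  shows "D / \<rho> - b * exp D \<le> - (1 + ln (\<rho> * b)) / \<rho>"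
proof -
  have "ln (\<rho> * b * exp D) \<le> \<rho> * b * exp D - 1" using assms by (intro ln_le_minus_one) auto
  moreover have "ln (\<rho> * b * exp D) = ln (\<rho> * b) + D" using assms by (simp add: ln_mult)
  ultimately have "D + 1 + ln (\<rho> * b) \<le> \<rho> * (b * exp D)" by simp
  then have "(D + 1 + ln (\<rho> * b)) / \<rho> \<le> b * exp D" using assms by (simp add: divide_le_eq mult.commute)
  then show ?thesis by (simp add: add_divide_distrib diff_divide_distrib)
qed

lemma analytic:
  assumes npo: "normalized_proximate_order vr \<rho>"
    and s1: "0 < \<sigma>'" and s2: "\<sigma>' < \<sigma>"
  shows "\<exists>C\<ge>1. \<forall>l::nat. \<forall>r\<ge>0. r ^ l * exp (- \<sigma> * r powr vr r) \<le> C * prox_G vr \<rho> l / \<sigma>' powr (real l / \<rho>)"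
proof -
  define V where "V = (\<lambda>r::real. r powr vr r)"
  have po: "proximate_order vr \<rho>" and mono: "strict_mono_on {0<..} V"
    and lim0: "(V \<longlongrightarrow> 0) (at_right 0)"
    using npo unfolding normalized_proximate_order_def V_def by auto
  have rho: "\<rho> > 0" and lim1: "(vr \<longlongrightarrow> \<rho>) at_top"
    and lim2: "((\<lambda>r. deriv vr r * r * ln r) \<longlongrightarrow> 0) at_top"
    and dif0: "\<And>r. r \<ge> 0 \<Longrightarrow> vr differentiable (at r within {0..})"
    using po unfolding proximate_order_def by auto
  have der: "(vr has_real_derivative deriv vr r) (at r)" if "r > 0" for r
  proof -
    have "at r within {0..} = at r" using that by (intro at_within_interior) auto
    then have "vr differentiable at r" using dif0[of r] that by simp
    then show ?thesis by (simp add: DERIV_deriv_iff_real_differentiable)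
  qed
  have Vpos: "V r = exp (vr r * ln r)" if "r > 0" for r
    using that by (simp add: V_def powr_def)
  have Vnn: "V r \<ge> 0" for r unfolding V_def by simp
  define L where "L = 1 + ln (\<rho> * \<sigma>)"
  define L' where "L' = 1 + ln (\<rho> * \<sigma>')"
  have LL: "L' < L" unfolding L_def L'_def using rho s1 s2 by simp
  define q where "q = (if L > 0 then max 0 (L' / L) else 0)"
  have q0: "q \<ge> 0" and q1: "q < 1" using LL by (auto simp: q_def field_simps)
  define \<epsilon> where "\<epsilon> = min (\<rho>/2) (min (\<rho>^2 * (\<sigma> - \<sigma>') / 2) (\<rho> * (1 - q)))"
  have eps0: "\<epsilon> > 0" using rho s2 q1 by (simp add: \<epsilon>_def)
  have eps1: "\<epsilon> \<le> \<rho>/2" "\<epsilon> \<le> \<rho>^2 * (\<sigma> - \<sigma>') / 2" "\<epsilon> \<le> \<rho> * (1 - q)"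
    by (simp_all add: \<epsilon>_def)
  have cbound: "1 / (\<rho> - \<epsilon>) - 1 / \<rho> \<le> \<sigma> - \<sigma>'"
  proof -
    have "\<rho> * (\<rho> - \<epsilon>) * (\<sigma> - \<sigma>') \<ge> \<rho> * (\<rho>/2) * (\<sigma> - \<sigma>')"
      using eps1 rho s2 by (intro mult_right_mono mult_left_mono) auto
    then have e: "\<epsilon> \<le> \<rho> * (\<rho> - \<epsilon>) * (\<sigma> - \<sigma>')" using eps1(2) by (simp add: power2_eq_square)
    have pe: "\<rho> - \<epsilon> > 0" using eps1 rho by simp
    have "1 / (\<rho> - \<epsilon>) - 1 / \<rho> = \<epsilon> / (\<rho> * (\<rho> - \<epsilon>))" using pe rho by (simp add: field_simps)
    also have "\<dots> \<le> \<sigma> - \<sigma>'" using e pe rho by (simp add: divide_le_eq mult.commute mult.left_commute)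
    finally show ?thesis .
  qed
  define \<theta> where "\<theta> = \<rho> / (\<rho> + \<epsilon>)"
  have th0: "\<theta> > 0" and th1: "\<theta> \<le> 1" using rho eps0 by (auto simp: \<theta>_def)
  have thL: "\<theta> * (L - ln \<theta>) \<ge> L'"
  proof -
    have "\<theta> * ln \<theta> \<le> 0" using th0 th1 by (simp add: mult_nonneg_nonpos)
    moreover have "\<theta> * L \<ge> L'"
    proof (cases "L > 0")
      case True
      have "q * (\<rho> + \<epsilon>) \<le> q * (\<rho> + \<rho> * (1 - q))" using eps1(3) q0 by (intro mult_left_mono) auto
      also have "\<dots> = \<rho> * (q * (2 - q))" by (simp add: algebra_simps)
      also have "\<dots> \<le> \<rho> * 1"
      proof -
        have "(1 - q)^2 \<ge> 0" by simp
        then have "q * (2 - q) \<le> 1" by (simp add: algebra_simps power2_eq_square)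
        then show ?thesis using rho by (intro mult_left_mono) auto
      qed
      finally have "q \<le> \<theta>" using rho eps0 by (simp add: \<theta>_def le_divide_eq)
      moreover have "L' / L \<le> q" using True by (simp add: q_def)
      ultimately have "L' / L \<le> \<theta>" by simp
      then show ?thesis using True by (simp add: divide_le_eq mult.commute)
    next
      case False
      then have "\<theta> * L \<ge> 1 * L" using th1 by (intro mult_right_mono_neg) auto
      then show ?thesis using LL by simp
    qed
    ultimately show ?thesis by (simp add: algebra_simps)
  qed
  have "((\<lambda>r. deriv vr r * r * ln r + vr r) \<longlongrightarrow> 0 + \<rho>) at_top"
    by (intro tendsto_add lim1 lim2)
  then have "eventually (\<lambda>r. dist (deriv vr r * r * ln r + vr r) \<rho> < \<epsilon>) at_top"
    using eps0 by (simp add: tendsto_iff)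
  then obtain R1 where R1: "\<And>r. r \<ge> R1 \<Longrightarrow> \<bar>deriv vr r * r * ln r + vr r - \<rho>\<bar> < \<epsilon>"
    by (auto simp: eventually_at_top_linorder dist_real_def)
  define R0 where "R0 = max R1 1"
  have R0pos: "R0 > 0" by (simp add: R0_def)
  have MV: "(\<rho> - \<epsilon>) * (ln r2 - ln r1) \<le> vr r2 * ln r2 - vr r1 * ln r1 \<and>
            vr r2 * ln r2 - vr r1 * ln r1 \<le> (\<rho> + \<epsilon>) * (ln r2 - ln r1)"
    if "R0 \<le> r1" "r1 \<le> r2" for r1 r2
  proof (cases "r1 = r2")
    case True then show ?thesis by simp
  next
    case False
    have r1: "r1 > 0" using that R0pos by simp
    have lt: "ln r1 < ln r2" using that False r1 by simp
    define g where "g = (\<lambda>u. vr (exp u) * u)"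
    have dg: "(g has_real_derivative (deriv vr (exp u) * exp u * u + vr (exp u))) (at u)" for u
    proof -
      have "((\<lambda>u. vr (exp u)) has_real_derivative deriv vr (exp u) * exp u) (at u)"
        by (rule DERIV_chain2[OF der DERIV_exp]) simp
      from DERIV_mult[OF this DERIV_ident] show ?thesis unfolding g_def by simp
    qed
    obtain z where z: "ln r1 < z" "z < ln r2" "g (ln r2) - g (ln r1) = (ln r2 - ln r1) * (deriv vr (exp z) * exp z * z + vr (exp z))"
      using MVT2[OF lt dg] by blast
    have "exp z \<ge> R1" using z(1) r1 that(1) unfolding R0_def
      by (metis exp_less_cancel_iff exp_ln less_eq_real_def max.bounded_iff order.trans)
    from R1[OF this] have bd: "\<bar>deriv vr (exp z) * exp z * z + vr (exp z) - \<rho>\<bar> < \<epsilon>" by simp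
    have gg: "g (ln r2) - g (ln r1) = vr r2 * ln r2 - vr r1 * ln r1"
      using r1 that by (simp add: g_def)
    have pos: "ln r2 - ln r1 > 0" using lt by simp
    define X where "X = deriv vr (exp z) * exp z * z + vr (exp z)"
    have X1: "\<rho> - \<epsilon> \<le> X" and X2: "X \<le> \<rho> + \<epsilon>" using bd unfolding X_def by linarith+
    have "(\<rho> - \<epsilon>) * (ln r2 - ln r1) \<le> X * (ln r2 - ln r1)"
      using X1 pos by (intro mult_right_mono) auto
    moreover have "X * (ln r2 - ln r1) \<le> (\<rho> + \<epsilon>) * (ln r2 - ln r1)"
      using X2 pos by (intro mult_right_mono) auto
    moreover have "vr r2 * ln r2 - vr r1 * ln r1 = X * (ln r2 - ln r1)"
      using z(3) gg unfolding X_def by (simp add: mult.commute)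
    ultimately show ?thesis by simp
  qed
  have pe: "\<rho> - \<epsilon> > 0" using eps1 rho by simp
  have Vcont: "isCont V x" if "x > 0" for x
  proof -
    have "isCont vr x" using der[OF that] by (rule DERIV_isCont)
    then show ?thesis unfolding V_def using that by (intro continuous_intros) auto
  qed
  have phi: "prox_phi vr y > 0 \<and> V (prox_phi vr y) = y" if y: "y > 0" for y
  proof -
    have "eventually (\<lambda>r. V r < y) (at_right 0)" using lim0 y by (rule order_tendstoD(2))
    then obtain b where b: "b > 0" "\<And>t. t > 0 \<Longrightarrow> t < b \<Longrightarrow> V t < y"
      unfolding eventually_at_right_field by auto
    define m where "m = max 0 ((ln y - vr R0 * ln R0) / (\<rho> - \<epsilon>))"
    define b' where "b' = R0 * exp m"
    have m0: "m \<ge> 0" by (simp add: m_def)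
    have b'R0: "b' \<ge> R0" using R0pos m0 by (simp add: b'_def)
    have lnb': "ln b' = ln R0 + m" using R0pos by (simp add: b'_def ln_mult)
    have "(\<rho> - \<epsilon>) * m \<ge> ln y - vr R0 * ln R0"
    proof -
      have "(ln y - vr R0 * ln R0) / (\<rho> - \<epsilon>) \<le> m" by (simp add: m_def)
      then show ?thesis using pe by (simp add: divide_le_eq mult.commute)
    qed
    with MV[OF order.refl b'R0] lnb' have "vr b' * ln b' \<ge> ln y" by simp
    then have "V b' \<ge> y" using b'R0 R0pos y Vpos[of b']
      by (metis exp_le_cancel_iff exp_ln less_le_trans)
    define a where "a = min (b/2) b'"
    have a0: "a > 0" using b R0pos b'R0 by (simp add: a_def)
    have "V a < y" using b a0 by (intro b(2)) (auto simp: a_def)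
    have ab': "a \<le> b'" by (simp add: a_def)
    have "\<exists>x. a \<le> x \<and> x \<le> b' \<and> V x = y"
      by (rule IVT) (use \<open>V a < y\<close> \<open>V b' \<ge> y\<close> ab' a0 Vcont in auto)
    then obtain R where R: "a \<le> R" "R \<le> b'" "V R = y" by blast
    have Rpos: "R > 0" using R a0 by simp
    have inj: "inj_on (\<lambda>r. r powr vr r) {0<..}" using mono unfolding V_def by (rule strict_mono_on_imp_inj_on)
    have "prox_phi vr y = R" unfolding prox_phi_def
      by (rule the_inv_into_f_eq[OF inj]) (use R Rpos in \<open>auto simp: V_def\<close>)
    then show ?thesis using R Rpos by simp
  qed
  define K where "K = R0 * exp (max 0 (L' / \<rho>))"
  have Kpos: "K > 0" using R0pos by (simp add: K_def)
  have lnK: "ln K = ln R0 + max 0 (L' / \<rho>)" using R0pos by (simp add: K_def ln_mult)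
  have KR0: "K \<ge> R0" using R0pos by (simp add: K_def)
  have Gform: "prox_G vr \<rho> l / \<sigma>' powr (real l / \<rho>) = prox_phi vr (real l) ^ l * exp (- (real l / \<rho> * L'))"
    if "l \<ge> 1" for l :: nat
  proof -
    have "(exp 1 * \<rho>) powr (real l / \<rho>) * \<sigma>' powr (real l / \<rho>) = (exp 1 * \<rho> * \<sigma>') powr (real l / \<rho>)"
      using rho s1 by (simp add: powr_mult)
    also have "\<dots> = exp (real l / \<rho> * L')"
      using rho s1 by (simp add: powr_def L'_def ln_mult mult.commute)
    finally have e: "(exp 1 * \<rho>) powr (real l / \<rho>) * \<sigma>' powr (real l / \<rho>) = exp (real l / \<rho> * L')" .
    have "prox_G vr \<rho> l / \<sigma>' powr (real l / \<rho>) = prox_phi vr (real l) ^ l / ((exp 1 * \<rho>) powr (real l / \<rho>) * \<sigma>' powr (real l / \<rho>))"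
      using that by (simp add: prox_G_def)
    also have "\<dots> = prox_phi vr (real l) ^ l / exp (real l / \<rho> * L')" by (simp only: e)
    finally show ?thesis by (simp add: exp_minus divide_inverse)
  qed
  have main: "r ^ l * exp (- \<sigma> * V r) \<le> prox_phi vr (real l) ^ l * exp (- (real l / \<rho> * L'))"
    if l1: "l \<ge> 1" and RK: "prox_phi vr (real l) \<ge> K" and r0: "r > 0" for l :: nat and r
  proof -
    define R where "R = prox_phi vr (real l)"
    have lpos: "real l > 0" using l1 by simp
    have Rpos: "R > 0" and VR: "V R = real l" using phi[OF lpos] by (auto simp: R_def)
    have RK': "R \<ge> K" using RK by (simp add: R_def)
    have lnR: "ln R \<ge> ln R0 + max 0 (L' / \<rho>)" using RK' Kpos lnK ln_le_cancel_iff[of K R] Rpos by linarith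
    have lexp: "real l = exp (vr R * ln R)" using VR Vpos[OF Rpos] by simp
    have expo: "real l * ln r - \<sigma> * V r \<le> real l * ln R - real l / \<rho> * L'"
    proof (cases "r < R0")
      case True
      have "ln r \<le> ln R0" using True r0 by simp
      also have "\<dots> \<le> ln R - L' / \<rho>" using lnR by linarith
      finally have "real l * ln r \<le> real l * (ln R - L' / \<rho>)" using lpos by (intro mult_left_mono) auto
      moreover have "\<sigma> * V r \<ge> 0" using s1 s2 Vnn[of r] by simp
      ultimately show ?thesis by (simp add: algebra_simps)
    next
      case False
      define D where "D = vr r * ln r - vr R * ln R"
      have Vr: "V r = real l * exp D" using Vpos[OF r0] lexp by (simp add: D_def exp_diff)
      have core: "(ln r - ln R) - \<sigma> * exp D \<le> - L' / \<rho>"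
      proof (cases "r \<ge> R")
        case True
        have "(\<rho> - \<epsilon>) * (ln r - ln R) \<le> D" using MV[of R r] True RK' KR0 by (simp add: D_def)
        then have d1: "ln r - ln R \<le> D / (\<rho> - \<epsilon>)" using pe by (simp add: le_divide_eq mult.commute)
        have D0: "D \<ge> 0"
        proof -
          have "ln r - ln R \<ge> 0" using True Rpos by simp
          then have "(\<rho> - \<epsilon>) * (ln r - ln R) \<ge> 0" using pe by simp
          then show ?thesis using \<open>(\<rho> - \<epsilon>) * (ln r - ln R) \<le> D\<close> by linarith
        qed
        define c where "c = 1 / (\<rho> - \<epsilon>) - 1 / \<rho>"
        have "D / (\<rho> - \<epsilon>) = D / \<rho> + c * D" unfolding c_def by (simp add: algebra_simps divide_inverse)
        moreover have "c * D \<le> (\<sigma> - \<sigma>') * exp D"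
        proof -
          have "c * D \<le> (\<sigma> - \<sigma>') * D" using cbound D0 unfolding c_def by (intro mult_right_mono) auto
          also have "\<dots> \<le> (\<sigma> - \<sigma>') * exp D" using s2 exp_ge_add_one_self[of D] by (intro mult_left_mono) linarith+
          finally show ?thesis .
        qed
        moreover have "D / \<rho> - \<sigma>' * exp D \<le> - L' / \<rho>" unfolding L'_def using key_ineq[OF rho s1] .
        ultimately show ?thesis using d1 by (simp add: algebra_simps)
      next
        case False
        then have rR: "r \<le> R" by simp
        have "vr R * ln R - vr r * ln r \<le> (\<rho> + \<epsilon>) * (ln R - ln r)" using MV[OF _ rR] \<open>\<not> r < R0\<close> by simp
        then have "- D \<le> (\<rho> + \<epsilon>) * (ln R - ln r)" by (simp add: D_def)
        then have d1: "ln r - ln R \<le> D / (\<rho> + \<epsilon>)" using rho eps0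
          by (simp add: le_divide_eq algebra_simps)
        have "D / (\<rho> + \<epsilon>) - \<sigma> * exp D = \<theta> * (D / \<rho> - (\<sigma> / \<theta>) * exp D)"
        proof -
          have "\<theta> * (D / \<rho>) = D / (\<rho> + \<epsilon>)" using rho by (simp add: \<theta>_def)
          moreover have "\<theta> * ((\<sigma> / \<theta>) * exp D) = \<sigma> * exp D" using th0 by simp
          ultimately show ?thesis by (simp only: right_diff_distrib)
        qed
        also have "\<dots> \<le> \<theta> * (- (1 + ln (\<rho> * (\<sigma> / \<theta>))) / \<rho>)"
          using key_ineq[OF rho, of "\<sigma> / \<theta>" D] th0 s1 s2 by (intro mult_left_mono) auto
        also have "1 + ln (\<rho> * (\<sigma> / \<theta>)) = L - ln \<theta>"
          using rho s1 s2 th0 by (simp add: L_def ln_div ln_mult)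
        also have "\<theta> * (- (L - ln \<theta>) / \<rho>) = - (\<theta> * (L - ln \<theta>)) / \<rho>" by (simp add: algebra_simps)
        also have "\<dots> \<le> - L' / \<rho>" using thL rho by (simp add: divide_le_eq)
        finally show ?thesis using d1 by simp
      qed
      have "real l * ((ln r - ln R) - \<sigma> * exp D) \<le> real l * (- L' / \<rho>)"
        using core lpos by (intro mult_left_mono) auto
      then show ?thesis using Vr by (simp add: algebra_simps)
    qed
    have "r ^ l * exp (- \<sigma> * V r) = exp (real l * ln r - \<sigma> * V r)"
      using r0 by (simp add: exp_diff ln_realpow[symmetric] exp_minus divide_inverse)
    also have "\<dots> \<le> exp (real l * ln R - real l / \<rho> * L')" using expo by simp
    also have "\<dots> = R ^ l * exp (- (real l / \<rho> * L'))"
      using Rpos by (simp add: exp_diff ln_realpow[symmetric] exp_minus divide_inverse)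
    finally show ?thesis by (simp add: R_def)
  qed
  define l0 where "l0 = nat \<lceil>V K\<rceil> + 1"
  have l01: "l0 \<ge> 1" by (simp add: l0_def)
  have large: "prox_phi vr (real l) \<ge> K" if "l \<ge> l0" for l :: nat
  proof (rule ccontr)
    assume "\<not> K \<le> prox_phi vr (real l)"
    then have lt: "prox_phi vr (real l) < K" by simp
    have lpos: "real l > 0" using that l01 by simp
    have P: "prox_phi vr (real l) > 0" "V (prox_phi vr (real l)) = real l" using phi[OF lpos] by auto
    have "V (prox_phi vr (real l)) < V K" using mono P(1) Kpos lt by (intro strict_mono_onD[OF mono]) auto
    moreover have "real l \<ge> V K"
    proof -
      have "V K \<le> real (nat \<lceil>V K\<rceil>)" by linarith
      also have "nat \<lceil>V K\<rceil> \<le> l" using that unfolding l0_def by linarith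
      then have "real (nat \<lceil>V K\<rceil>) \<le> real l" by (simp only: of_nat_le_iff)
      finally show ?thesis .
    qed
    ultimately show False using P(2) by simp
  qed
  have Gpos: "prox_G vr \<rho> l > 0" for l
  proof (cases "l = 0")
    case False
    then have "real l > 0" by simp
    from phi[OF this] show ?thesis using False rho by (simp add: prox_G_def)
  qed (simp add: prox_G_def)
  have spos: "\<sigma>' powr t > 0" for t using s1 by simp
  have expV: "exp (- \<sigma> * V r) \<le> 1" for r
    using Vnn[of r] s1 s2 by simp
  have blarge: "r ^ l * exp (- \<sigma> * V r) \<le> prox_G vr \<rho> l / \<sigma>' powr (real l / \<rho>)"
    if "l \<ge> l0" "r \<ge> 0" for l :: nat and r
  proof (cases "r = 0")
    case True
    then have "r ^ l = 0" using that l01 by simp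
    moreover have "prox_G vr \<rho> l / \<sigma>' powr (real l / \<rho>) > 0" using Gpos[of l] spos[of "real l / \<rho>"] by simp
    ultimately show ?thesis by (metis mult_zero_left less_eq_real_def)
  next
    case False
    then have "r > 0" using that by simp
    from main[OF _ large[OF that(1)] this] that(1) l01 Gform[of l] show ?thesis by simp
  qed
  define B where "B = max 1 (prox_G vr \<rho> l0 / \<sigma>' powr (real l0 / \<rho>))"
  have bsmall: "r ^ l * exp (- \<sigma> * V r) \<le> B"
    if "l < l0" "r \<ge> 0" for l :: nat and r
  proof (cases "r \<le> 1")
    case True
    have "r ^ l \<le> 1" using True that by (simp add: power_le_one)
    then have "r ^ l * exp (- \<sigma> * V r) \<le> 1 * 1" using expV[of r] that by (intro mult_mono) auto
    then show ?thesis by (simp add: B_def)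
  next
    case False
    have "r ^ l \<le> r ^ l0" using False that by (intro power_increasing) auto
    then have "r ^ l * exp (- \<sigma> * V r) \<le> r ^ l0 * exp (- \<sigma> * V r)" by (intro mult_right_mono) auto
    also have "\<dots> \<le> prox_G vr \<rho> l0 / \<sigma>' powr (real l0 / \<rho>)" using blarge[of l0 r] that by simp
    finally show ?thesis by (simp add: B_def)
  qed
  define C where "C = 1 + (\<Sum>l<l0. B * \<sigma>' powr (real l / \<rho>) / prox_G vr \<rho> l)"
  have Bpos: "B > 0" by (simp add: B_def)
  have terms: "B * \<sigma>' powr (real l / \<rho>) / prox_G vr \<rho> l \<ge> 0" for l
    using Bpos Gpos[of l] spos[of "real l / \<rho>"] by simp
  have C1: "C \<ge> 1" unfolding C_def using terms by (simp add: sum_nonneg)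
  show ?thesis
  proof (intro exI[of _ C] conjI allI impI C1)
    fix l :: nat and r :: real
    assume r: "r \<ge> 0"
    have Q: "prox_G vr \<rho> l / \<sigma>' powr (real l / \<rho>) > 0" using Gpos[of l] spos[of "real l / \<rho>"] by simp
    have goal: "r ^ l * exp (- \<sigma> * V r) \<le> C * (prox_G vr \<rho> l / \<sigma>' powr (real l / \<rho>))"
    proof (cases "l \<ge> l0")
      case True
      have "r ^ l * exp (- \<sigma> * V r) \<le> 1 * (prox_G vr \<rho> l / \<sigma>' powr (real l / \<rho>))"
        using blarge[OF True r] by simp
      also have "\<dots> \<le> C * (prox_G vr \<rho> l / \<sigma>' powr (real l / \<rho>))"
        using C1 Q by (intro mult_right_mono) auto
      finally show ?thesis .
    next
      case False
      then have ll: "l < l0" by simp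
      have "B * \<sigma>' powr (real l / \<rho>) / prox_G vr \<rho> l \<le> (\<Sum>l<l0. B * \<sigma>' powr (real l / \<rho>) / prox_G vr \<rho> l)"
        using ll terms by (intro member_le_sum) auto
      then have tC: "B * \<sigma>' powr (real l / \<rho>) / prox_G vr \<rho> l \<le> C" by (simp add: C_def)
      have "B = (B * \<sigma>' powr (real l / \<rho>) / prox_G vr \<rho> l) * (prox_G vr \<rho> l / \<sigma>' powr (real l / \<rho>))"
        using Gpos[of l] spos[of "real l / \<rho>"] by (simp add: field_simps)
      also have "\<dots> \<le> C * (prox_G vr \<rho> l / \<sigma>' powr (real l / \<rho>))"
        using tC Q by (intro mult_right_mono) auto
      finally show ?thesis using bsmall[OF ll r] by simp
    qed
    then show "r ^ l * exp (- \<sigma> * r powr vr r) \<le> C * prox_G vr \<rho> l / \<sigma>' powr (real l / \<rho>)"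
      by (simp add: V_def)
  qed
qed


theorem lemma3p10:
  fixes vr :: "real \<Rightarrow> real" and \<rho> \<sigma> \<sigma>' :: real and n :: nat
  assumes "normalized_proximate_order vr \<rho>"
    and "0 < \<sigma>'" and "\<sigma>' < \<sigma>"
  shows "\<exists>C::real. \<forall>l::nat.
     prox_norm n vr \<sigma> (\<lambda>x. clif_pow n (paravec n x) l)
       \<le> ereal (C * prox_G vr \<rho> l / \<sigma>' powr (real l / \<rho>))"
proof -
  obtain C where C: "\<And>l r. r \<ge> 0 \<Longrightarrow> r ^ l * exp (- \<sigma> * r powr vr r) \<le> C * prox_G vr \<rho> l / \<sigma>' powr (real l / \<rho>)"
    using analytic[OF assms] by blast
  show ?thesis
  proof (intro exI allI)
    fix l :: nat
    show "prox_norm n vr \<sigma> (\<lambda>x. clif_pow n (paravec n x) l) \<le> ereal (C * prox_G vr \<rho> l / \<sigma>' powr (real l / \<rho>))"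
      unfolding prox_norm_def
    proof (rule SUP_least)
      fix x assume "x \<in> paravectors n"
      have "para_norm n x \<ge> 0" unfolding para_norm_def by (simp add: sum_nonneg)
      from C[OF this, of l] show "ereal (clif_norm n (clif_pow n (paravec n x) l) * exp (- \<sigma> * para_norm n x powr vr (para_norm n x)))
          \<le> ereal (C * prox_G vr \<rho> l / \<sigma>' powr (real l / \<rho>))"
        by (simp add: norm_pow)
    qed
  qed
qed

end
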